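(* Let $\boldsymbol{\lambda}=(\lambda,\mu,\nu^1,\dots,\nu^n)$ be a symmetric Schubert problem on $\mathrm{Gr}(m,\mathbb{C}^{2m})$. If \[ 2+\tfrac12\big(|\nu^1|+\dots+|\nu^n|+m-\ell(\lambda)-\ell(\mu)\big)\leq n, \] then \[ 2\leq\|\lambda\|+\|\mu\|+\|\nu^1\|+\dots+\|\nu^n\|-\tfrac12(m^2+m). \]
   Context: Partitions $\kappa$ satisfy $m\ge\kappa_1\ge\dots\ge\kappa_m\ge0$, $|\kappa|=\sum\kappa_i$, and $\ell(\kappa)=\max\{i:i\le\kappa_i\}$ is the number of boxes on the main diagonal of the Young diagram; $\kappa$ is symmetric if its Young diagram is symmetric about the main diagonal, and then $\|\kappa\|=\tfrac12(|\kappa|+\ell(\kappa))$. A symmetric Schubert problem on $\mathrm{Gr}(m,\mathbb{C}^{2m})$ is a list of nonempty symmetric partitions whose sizes sum to $m^2$, so here $|\lambda|+|\mu|+\sum_i|\nu^i|=m^2$. *)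

theory Defs
  imports Main Complex_Main
begin

text \<open>A partition kappa fitting in the m x m box, represented as the list
  [kappa_1, ..., kappa_m] (index i of the paper is list position i-1).\<close>

definition box_partition :: "nat \<Rightarrow> nat list \<Rightarrow> bool" where
  "box_partition m k \<longleftrightarrow> length k = m \<and> sorted_wrt (\<ge>) k \<and> (\<forall>x\<in>set k. x \<le> m)"

definition part_entry :: "nat list \<Rightarrow> nat \<Rightarrow> nat" where
  "part_entry k i = (if 1 \<le> i \<and> i \<le> length k then k ! (i - 1) else 0)"

definition part_size :: "nat list \<Rightarrow> nat" where
  "part_size k = sum_list k"

definition diag_len :: "nat list \<Rightarrow> nat" where
  "diag_len k = Max (insert 0 {i. 1 \<le> i \<and> i \<le> length k \<and> i \<le> part_entry k i})"

definition conj_entry :: "nat list \<Rightarrow> nat \<Rightarrow> nat" where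
  "conj_entry k j = card {i. 1 \<le> i \<and> i \<le> length k \<and> j \<le> part_entry k i}"

definition symmetric_partition :: "nat list \<Rightarrow> bool" where
  "symmetric_partition k \<longleftrightarrow> (\<forall>j\<ge>1. conj_entry k j = part_entry k j)"

definition sym_norm :: "nat list \<Rightarrow> real" where
  "sym_norm k = (real (part_size k) + real (diag_len k)) / 2"

definition sym_schubert_problem :: "nat \<Rightarrow> nat list \<Rightarrow> nat list \<Rightarrow> nat list list \<Rightarrow> bool" where
  "sym_schubert_problem m la mu nus \<longleftrightarrow>
     (\<forall>k\<in>set (la # mu # nus). box_partition m k \<and> symmetric_partition k \<and> part_size k > 0)
     \<and> part_size la + part_size mu + (\<Sum>k\<leftarrow>nus. part_size k) = m ^ 2"

end

theory Submission
  imports Defs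
begin

lemma diag_pos:
  assumes "box_partition m k" "part_size k > 0"
  shows "diag_len k \<ge> 1"
proof -
  have ne: "k \<noteq> []" using assms(2) by (auto simp: part_size_def)
  then obtain x xs where k: "k = x # xs" by (cases k) auto
  have s: "\<forall>y\<in>set xs. y \<le> x" using assms(1) k by (auto simp: box_partition_def)
  have "x > 0"
  proof (rule ccontr)
    assume "\<not> x > 0"
    hence "\<forall>y\<in>set k. y = 0" using s k by auto
    hence "sum_list k = 0" by (induction k) auto
    thus False using assms(2) unfolding part_size_def by linarith
  qed
  hence "1 \<in> {i. 1 \<le> i \<and> i \<le> length k \<and> i \<le> part_entry k i}"
    using k by (auto simp: part_entry_def)
  moreover have "finite {i. 1 \<le> i \<and> i \<le> length k \<and> i \<le> part_entry k i}" by (rule finite_subset[of _ "{..length k}"]) auto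
  ultimately show ?thesis unfolding diag_len_def
    by (meson Max_ge finite_insert insertI2 order_trans)
qed

lemma real_sum_list: "real (\<Sum>k\<leftarrow>nus. f k) = (\<Sum>k\<leftarrow>nus. real (f k))"
  by (induction nus) auto

lemma sum_norms: "(\<Sum>k\<leftarrow>nus. sym_norm k) = ((\<Sum>k\<leftarrow>nus. real (part_size k)) + (\<Sum>k\<leftarrow>nus. real (diag_len k))) / 2"
  by (induction nus) (auto simp: sym_norm_def field_simps)

theorem lemma4p14:
  fixes m n :: nat and la mu :: "nat list" and nus :: "nat list list"
  assumes "sym_schubert_problem m la mu nus"
    and "length nus = n"
    and "2 + ((\<Sum>k\<leftarrow>nus. real (part_size k)) + real m - real (diag_len la) - real (diag_len mu)) / 2 \<le> real n"
  shows "2 \<le> sym_norm la + sym_norm mu + (\<Sum>k\<leftarrow>nus. sym_norm k) - (real m ^ 2 + real m) / 2"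
proof -
  have A: "\<forall>k\<in>set nus. box_partition m k \<and> part_size k > 0" using assms(1) by (auto simp: sym_schubert_problem_def)
  have "\<forall>k\<in>set nus. diag_len k \<ge> 1" using A diag_pos by blast
  hence "(\<Sum>k\<leftarrow>nus. real (diag_len k) - 1) \<ge> 0" by (intro sum_list_nonneg) auto
  moreover have "(\<Sum>k\<leftarrow>nus. real (diag_len k) - 1) = (\<Sum>k\<leftarrow>nus. real (diag_len k)) - real (length nus)"
    by (induction nus) auto
  ultimately have D: "(\<Sum>k\<leftarrow>nus. real (diag_len k)) \<ge> real n" using assms(2) by simp
  have "(\<Sum>k\<leftarrow>nus. real (part_size k) - 1) \<ge> 0" using A by (intro sum_list_nonneg) auto
  moreover have "(\<Sum>k\<leftarrow>nus. real (part_size k) - 1) = (\<Sum>k\<leftarrow>nus. real (part_size k)) - real (length nus)"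
    by (induction nus) auto
  ultimately have P: "(\<Sum>k\<leftarrow>nus. real (part_size k)) \<ge> real n" using assms(2) by simp
  have tot: "real (part_size la) + real (part_size mu) + (\<Sum>k\<leftarrow>nus. real (part_size k)) = real m ^ 2"
  proof -
    have "part_size la + part_size mu + (\<Sum>k\<leftarrow>nus. part_size k) = m ^ 2" using assms(1) by (simp add: sym_schubert_problem_def)
    hence "real (part_size la + part_size mu + (\<Sum>k\<leftarrow>nus. part_size k)) = real m ^ 2" by simp
    thus ?thesis by (simp add: real_sum_list)
  qed
  show ?thesis unfolding sum_norms using tot D P assms(3) by (simp add: sym_norm_def field_simps)
qed

end
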